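(* Let $G$ be a group acting on a set $X$. Let $A\subset G$ and $Y\subset X$ be nonempty with $Y$ finite, and suppose there exists $\alpha\in\,]0,1[$ such that $\mathrm{Sym}_{\alpha}(Y)\subset AA^{-1}$ and $|A^{-1}\cdot Y|\leq\frac{3-\alpha}{2}|Y|$. Then $AA^{-1}$ is a subgroup of $G$.
   Context: $AA^{-1}=\{ab^{-1}\mid a,b\in A\}$, $A^{-1}\cdot Y=\{a^{-1}\cdot y\mid a\in A,y\in Y\}$, and $\mathrm{Sym}_{\alpha}(Y)=\{g\in G\mid |g\cdot Y\cap Y|\geq\alpha|Y|\}$. *)

theory Defs
  imports "HOL-Algebra.Group_Action" Complex_Main
begin

definition diff_set :: "('a, 'm) monoid_scheme \<Rightarrow> 'a set \<Rightarrow> 'a set" where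
  "diff_set G A = {a \<otimes>\<^bsub>G\<^esub> inv\<^bsub>G\<^esub> b | a b. a \<in> A \<and> b \<in> A}"

definition inv_act_set :: "('a, 'm) monoid_scheme \<Rightarrow> ('a \<Rightarrow> 'b \<Rightarrow> 'b) \<Rightarrow> 'a set \<Rightarrow> 'b set \<Rightarrow> 'b set" where
  "inv_act_set G \<phi> A Y = {\<phi> (inv\<^bsub>G\<^esub> a) y | a y. a \<in> A \<and> y \<in> Y}"

definition Sym_alpha :: "('a, 'm) monoid_scheme \<Rightarrow> ('a \<Rightarrow> 'b \<Rightarrow> 'b) \<Rightarrow> real \<Rightarrow> 'b set \<Rightarrow> 'a set" where
  "Sym_alpha G \<phi> \<alpha> Y = {g \<in> carrier G. real (card ((\<phi> g) ` Y \<inter> Y)) \<ge> \<alpha> * real (card Y)}"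

end

theory Submission
  imports Defs
begin

context group_action
begin

lemma grp: "group G"
  using group_hom group_hom.axioms(1) by blast

lemma img_sub: "g \<in> carrier G \<Longrightarrow> Y \<subseteq> E \<Longrightarrow> \<phi> g ` Y \<subseteq> E"
  using surj_prop by blast

lemma card_img: "g \<in> carrier G \<Longrightarrow> Y \<subseteq> E \<Longrightarrow> card (\<phi> g ` Y) = card Y"
  by (meson card_image inj_on_subset inj_prop)

lemma img_int: "g \<in> carrier G \<Longrightarrow> B \<subseteq> E \<Longrightarrow> C \<subseteq> E \<Longrightarrow> \<phi> g ` (B \<inter> C) = \<phi> g ` B \<inter> \<phi> g ` C"
  by (rule inj_on_image_Int[OF inj_prop]) auto

lemma img_comp: "g \<in> carrier G \<Longrightarrow> h \<in> carrier G \<Longrightarrow> Y \<subseteq> E \<Longrightarrow> \<phi> (g \<otimes> h) ` Y = \<phi> g ` (\<phi> h ` Y)"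
  using composition_rule by (auto simp: image_iff) (metis subsetD)+

lemma img_one: "Y \<subseteq> E \<Longrightarrow> \<phi> \<one> ` Y = Y"
  using id_eq_one[symmetric] by (auto simp: image_iff)

lemma prod_bound:
  assumes g: "g \<in> carrier G" and h: "h \<in> carrier G" and Y: "Y \<subseteq> E" "finite Y"
  shows "real (card (\<phi> (g \<otimes> h) ` Y \<inter> Y)) \<ge>
     real (card (\<phi> h ` Y \<inter> Y)) + real (card (\<phi> g ` Y \<inter> Y)) - real (card Y)"
proof -
  define U where "U = \<phi> (g \<otimes> h) ` Y \<inter> \<phi> g ` Y"
  define V where "V = \<phi> g ` Y \<inter> Y"
  have hY: "\<phi> h ` Y \<subseteq> E" using img_sub h Y by blast
  have U: "U = \<phi> g ` (\<phi> h ` Y \<inter> Y)"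
    unfolding U_def using img_comp[OF g h Y(1)] img_int[OF g hY Y(1)] by simp
  have cU: "card U = card (\<phi> h ` Y \<inter> Y)"
    unfolding U using card_img[OF g] hY by blast
  have fin: "finite (\<phi> g ` Y)" using Y by simp
  have sub: "U \<union> V \<subseteq> \<phi> g ` Y" unfolding U_def V_def by blast
  have "card (U \<union> V) \<le> card Y"
    using card_mono[OF fin sub] card_img[OF g Y(1)] by simp
  moreover have "card U + card V = card (U \<union> V) + card (U \<inter> V)"
    by (rule card_Un_Int) (use fin U_def V_def in auto)
  moreover have "card (U \<inter> V) \<le> card (\<phi> (g \<otimes> h) ` Y \<inter> Y)"
    by (rule card_mono) (use Y U_def V_def in auto)
  ultimately show ?thesis using cU unfolding V_def by linarith
qed

end

theorem mainTheorem3: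
  fixes G (structure) and X :: "'b set" and \<phi> :: "'a \<Rightarrow> 'b \<Rightarrow> 'b"
    and A :: "'a set" and Y :: "'b set" and \<alpha> :: real
  assumes "group_action G X \<phi>"
    and "A \<subseteq> carrier G" and "A \<noteq> {}"
    and "Y \<subseteq> X" and "Y \<noteq> {}" and "finite Y"
    and "0 < \<alpha>" and "\<alpha> < 1"
    and "Sym_alpha G \<phi> \<alpha> Y \<subseteq> diff_set G A"
    and "finite (inv_act_set G \<phi> A Y)"
    and "real (card (inv_act_set G \<phi> A Y)) \<le> (3 - \<alpha>) / 2 * real (card Y)"
  shows "subgroup (diff_set G A) G"
proof -
  interpret group_action G X \<phi> by fact
  interpret group G by (rule grp)
  note AG = assms(2)
  let ?I = "inv_act_set G \<phi> A Y"
  have L1: "real (card (\<phi> (b \<otimes> inv a) ` Y \<inter> Y)) \<ge> (1 + \<alpha>) / 2 * real (card Y)"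
    if a: "a \<in> A" and b: "b \<in> A" for a b
  proof -
    have aG: "a \<in> carrier G" and bG: "b \<in> carrier G" using a b AG by auto
    define P where "P = \<phi> (inv a) ` Y"
    define Q where "Q = \<phi> (inv b) ` Y"
    have PI: "P \<subseteq> ?I" unfolding P_def inv_act_set_def using a by blast
    have QI: "Q \<subseteq> ?I" unfolding Q_def inv_act_set_def using b by blast
    have cP: "card P = card Y" unfolding P_def using card_img aG assms(4) by simp
    have cQ: "card Q = card Y" unfolding Q_def using card_img bG assms(4) by simp
    have fP: "finite P" "finite Q" using P_def Q_def assms(6) by auto
    have "card (P \<union> Q) \<le> card ?I" using card_mono[OF assms(10)] PI QI by simp
    moreover have "card P + card Q = card (P \<union> Q) + card (P \<inter> Q)"
      by (rule card_Un_Int) (use fP in auto)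
    ultimately have c1: "real (card (P \<inter> Q)) \<ge> (1 + \<alpha>) / 2 * real (card Y)"
      using assms(11) cP cQ by (simp add: field_simps)
    have PX: "P \<subseteq> X" "Q \<subseteq> X" using P_def Q_def img_sub aG bG assms(4) by auto
    have "\<phi> b ` (P \<inter> Q) = \<phi> b ` P \<inter> \<phi> b ` Q" using img_int bG PX by blast
    also have "\<phi> b ` P = \<phi> (b \<otimes> inv a) ` Y"
      unfolding P_def using img_comp aG bG assms(4) by simp
    also have "\<phi> b ` Q = Y"
      unfolding Q_def using img_comp[of b "inv b" Y] bG assms(4) img_one by simp
    finally have "card (\<phi> (b \<otimes> inv a) ` Y \<inter> Y) = card (P \<inter> Q)"
      using card_img[of b "P \<inter> Q"] bG PX by auto
    thus ?thesis using c1 by simp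
  qed
  have DG: "diff_set G A \<subseteq> carrier G" unfolding diff_set_def using AG by blast
  have L2: "real (card (\<phi> g ` Y \<inter> Y)) \<ge> (1 + \<alpha>) / 2 * real (card Y)"
    if "g \<in> diff_set G A" for g
    using that L1 unfolding diff_set_def by blast
  show ?thesis
  proof
    show "diff_set G A \<subseteq> carrier G" by fact
  next
    obtain a where a: "a \<in> A" using assms(3) by blast
    hence "a \<otimes> inv a = \<one>" using AG by auto
    thus "\<one> \<in> diff_set G A" unfolding diff_set_def using a by force
  next
    fix x assume "x \<in> diff_set G A"
    then obtain a b where ab: "a \<in> A" "b \<in> A" "x = a \<otimes> inv b"
      unfolding diff_set_def by blast
    hence "inv x = b \<otimes> inv a" using AG by (auto simp: inv_mult_group subset_iff)
    thus "inv x \<in> diff_set G A" unfolding diff_set_def using ab by blast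
  next
    fix g h assume g: "g \<in> diff_set G A" and h: "h \<in> diff_set G A"
    have gG: "g \<in> carrier G" and hG: "h \<in> carrier G" using g h DG by auto
    have "real (card (\<phi> (g \<otimes> h) ` Y \<inter> Y)) \<ge> \<alpha> * real (card Y)"
      using prod_bound[OF gG hG assms(4,6)] L2[OF g] L2[OF h]
      by (simp add: field_simps)
    hence "g \<otimes> h \<in> Sym_alpha G \<phi> \<alpha> Y" unfolding Sym_alpha_def using gG hG by auto
    thus "g \<otimes> h \<in> diff_set G A" using assms(9) by blast
  qed
qed

end
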